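(* Suppose $\Phi$ is of affine type, $c$ is a Coxeter element, and $\beta$ is a root contained in $U_c$. Then $E_c(\beta^\vee,\delta)=E_c(\delta^\vee,\beta)=0$.
   Context: $A=[a_{ij}]_{1\le i,j\le n}$ is a symmetrizable Cartan matrix of affine type with symmetrizing constants $d_i$; $V$ has basis of simple roots $\alpha_1,\dots,\alpha_n$, simple co-roots $\alpha_i^\vee=d_i^{-1}\alpha_i$, and symmetric bilinear form $K$ with $K(\alpha_i^\vee,\alpha_j)=a_{ij}$; $W$ is generated by $s_i(v)=v-K(\alpha_i^\vee,v)\alpha_i$. $\Phi$ is the root system; its imaginary roots are the nonzero integer multiples of $\delta$, the positive imaginary root closest to $0$. For a real root $\beta$, $\beta^\vee=\frac2{K(\beta,\beta)}\beta$; $\delta^\vee$ is the positive imaginary root closest to $0$ in the dual root system (Cartan matrix $A^T$), a positive multiple of $\delta$ (and $\beta^\vee$ means $\delta^\vee$ when $\beta=\delta$). A Coxeter element $c$ is indexed as $c=s_1\cdots s_n$; $E_c$ is the bilinear form on $V$ with $E_c(\alpha_i^\vee,\alpha_j)=a_{ij}$ if $i>j$, $1$ if $i=j$, $0$ if $i<j$. With $\alpha_{\mathrm{aff}}$ the affine simple root and $V_{\mathrm{fin}}$ the span of the other simple roots, $\gamma_c$ is the unique vector of $V_{\mathrm{fin}}$ with $c\gamma_c=\gamma_c+\delta$, and $U_c=\{v\in V:K(\gamma_c,v)=0\}$. *)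

theory Defs
  imports Main "HOL.Real"
begin

text \<open>Indices run over 0..n-1 (the paper's 1..n shifted by one).
A vector of V is represented by its coordinates in the basis of simple roots,
as a function nat => real that is zero outside {0..<n}.\<close>

definition gcm :: "nat \<Rightarrow> (nat \<Rightarrow> nat \<Rightarrow> int) \<Rightarrow> bool" where
  "gcm n A \<longleftrightarrow> 0 < n \<and> (\<forall>i<n. A i i = 2) \<and> (\<forall>i<n. \<forall>j<n. i \<noteq> j \<longrightarrow> A i j \<le> 0)
     \<and> (\<forall>i<n. \<forall>j<n. A i j = 0 \<longleftrightarrow> A j i = 0)"

definition indecomposable :: "nat \<Rightarrow> (nat \<Rightarrow> nat \<Rightarrow> int) \<Rightarrow> bool" where
  "indecomposable n A \<longleftrightarrow> \<not> (\<exists>S. S \<subseteq> {..<n} \<and> S \<noteq> {} \<and> S \<noteq> {..<n} \<and>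
      (\<forall>i\<in>S. \<forall>j\<in>{..<n} - S. A i j = 0))"

text \<open>Affine type (Kac, Thm. 4.3): indecomposable GCM with a positive null vector.\<close>
definition affine_type :: "nat \<Rightarrow> (nat \<Rightarrow> nat \<Rightarrow> int) \<Rightarrow> bool" where
  "affine_type n A \<longleftrightarrow> gcm n A \<and> indecomposable n A \<and>
     (\<exists>u::nat \<Rightarrow> real. (\<forall>i<n. u i > 0) \<and> (\<forall>i<n. (\<Sum>j<n. of_int (A i j) * u j) = 0))"

definition symmetrizer :: "nat \<Rightarrow> (nat \<Rightarrow> nat \<Rightarrow> int) \<Rightarrow> (nat \<Rightarrow> real) \<Rightarrow> bool" where
  "symmetrizer n A d \<longleftrightarrow> (\<forall>i<n. d i > 0) \<and>
     (\<forall>i<n. \<forall>j<n. d i * of_int (A i j) = d j * of_int (A j i))"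

text \<open>The form K with K(alpha_i^vee, alpha_j) = a_ij, i.e. K(alpha_i, alpha_j) = d_i a_ij.\<close>
definition Kform :: "nat \<Rightarrow> (nat \<Rightarrow> nat \<Rightarrow> int) \<Rightarrow> (nat \<Rightarrow> real) \<Rightarrow> (nat \<Rightarrow> real) \<Rightarrow> (nat \<Rightarrow> real) \<Rightarrow> real" where
  "Kform n A d u v = (\<Sum>i<n. \<Sum>j<n. d i * of_int (A i j) * u i * v j)"

definition simple_root :: "nat \<Rightarrow> nat \<Rightarrow> real" where
  "simple_root i = (\<lambda>j. if j = i then 1 else 0)"

definition simple_coroot :: "(nat \<Rightarrow> real) \<Rightarrow> nat \<Rightarrow> nat \<Rightarrow> real" where
  "simple_coroot d i = (\<lambda>j. simple_root i j / d i)"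

definition sref :: "nat \<Rightarrow> (nat \<Rightarrow> nat \<Rightarrow> int) \<Rightarrow> (nat \<Rightarrow> real) \<Rightarrow> nat \<Rightarrow> (nat \<Rightarrow> real) \<Rightarrow> (nat \<Rightarrow> real)" where
  "sref n A d i v = (\<lambda>j. v j - Kform n A d (simple_coroot d i) v * simple_root i j)"

inductive_set real_roots :: "nat \<Rightarrow> (nat \<Rightarrow> nat \<Rightarrow> int) \<Rightarrow> (nat \<Rightarrow> real) \<Rightarrow> (nat \<Rightarrow> real) set"
  for n A d where
  simple: "i < n \<Longrightarrow> simple_root i \<in> real_roots n A d"
| refl: "\<beta> \<in> real_roots n A d \<Longrightarrow> i < n \<Longrightarrow> sref n A d i \<beta> \<in> real_roots n A d"

text \<open>Primitive positive integer null vector of a matrix M (coordinates in the simple basis):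
for M = A this is delta, the positive imaginary root closest to 0.\<close>
definition null_root :: "nat \<Rightarrow> (nat \<Rightarrow> nat \<Rightarrow> int) \<Rightarrow> nat \<Rightarrow> real" where
  "null_root n M = (THE v. (\<forall>i. n \<le> i \<longrightarrow> v i = 0) \<and> (\<forall>i<n. v i \<in> \<int> \<and> v i > 0) \<and>
      (\<forall>i<n. (\<Sum>j<n. of_int (M i j) * v j) = 0) \<and>
      (\<forall>w. (\<forall>i. n \<le> i \<longrightarrow> w i = 0) \<and> (\<forall>i<n. w i \<in> \<int>) \<and>
           (\<forall>i<n. (\<Sum>j<n. of_int (M i j) * w j) = 0) \<longrightarrow> (\<exists>k\<in>\<int>. \<forall>i. w i = k * v i)))"

definition delta :: "nat \<Rightarrow> (nat \<Rightarrow> nat \<Rightarrow> int) \<Rightarrow> nat \<Rightarrow> real" where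
  "delta n A = null_root n A"

text \<open>delta^vee: the positive imaginary root closest to 0 of the dual root system
(Cartan matrix A^T, simple roots alpha_i^vee = alpha_i / d_i), expressed in the alpha basis.\<close>
definition delta_vee :: "nat \<Rightarrow> (nat \<Rightarrow> nat \<Rightarrow> int) \<Rightarrow> (nat \<Rightarrow> real) \<Rightarrow> nat \<Rightarrow> real" where
  "delta_vee n A d = (\<lambda>i. null_root n (\<lambda>i j. A j i) i / d i)"

definition roots :: "nat \<Rightarrow> (nat \<Rightarrow> nat \<Rightarrow> int) \<Rightarrow> (nat \<Rightarrow> real) \<Rightarrow> (nat \<Rightarrow> real) set" where
  "roots n A d = real_roots n A d \<union> {(\<lambda>i. of_int k * delta n A i) | k::int. k \<noteq> 0}"

text \<open>Co-root: 2 beta / K(beta,beta) for real beta; for imaginary beta = k delta we use k delta^vee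
(so that delta^vee is the co-root of delta).\<close>
definition coroot :: "nat \<Rightarrow> (nat \<Rightarrow> nat \<Rightarrow> int) \<Rightarrow> (nat \<Rightarrow> real) \<Rightarrow> (nat \<Rightarrow> real) \<Rightarrow> nat \<Rightarrow> real" where
  "coroot n A d \<beta> = (if \<beta> \<in> real_roots n A d
      then (\<lambda>i. 2 * \<beta> i / Kform n A d \<beta> \<beta>)
      else (\<lambda>i. (THE k. \<forall>j. \<beta> j = k * delta n A j) * delta_vee n A d i))"

text \<open>Coxeter element c = s_0 s_1 ... s_(n-1) (paper: s_1 ... s_n).\<close>
definition cox :: "nat \<Rightarrow> (nat \<Rightarrow> nat \<Rightarrow> int) \<Rightarrow> (nat \<Rightarrow> real) \<Rightarrow> (nat \<Rightarrow> real) \<Rightarrow> (nat \<Rightarrow> real)" where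
  "cox n A d v = foldr (sref n A d) [0..<n] v"

text \<open>E_c(alpha_i^vee, alpha_j) = a_ij (i>j), 1 (i=j), 0 (i<j).\<close>
definition Ecform :: "nat \<Rightarrow> (nat \<Rightarrow> nat \<Rightarrow> int) \<Rightarrow> (nat \<Rightarrow> real) \<Rightarrow> (nat \<Rightarrow> real) \<Rightarrow> (nat \<Rightarrow> real) \<Rightarrow> real" where
  "Ecform n A d u v = (\<Sum>i<n. \<Sum>j<n.
      d i * (if i > j then of_int (A i j) else if i = j then 1 else 0) * u i * v j)"

text \<open>gamma_c: the unique vector in V_fin (span of simple roots other than alpha_aff)
with c gamma_c = gamma_c + delta.\<close>
definition gamma_c :: "nat \<Rightarrow> (nat \<Rightarrow> nat \<Rightarrow> int) \<Rightarrow> (nat \<Rightarrow> real) \<Rightarrow> nat \<Rightarrow> nat \<Rightarrow> real" where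
  "gamma_c n A d aff = (THE \<gamma>. (\<forall>j. (n \<le> j \<or> j = aff) \<longrightarrow> \<gamma> j = 0) \<and>
      cox n A d \<gamma> = (\<lambda>j. \<gamma> j + delta n A j))"

definition U_c :: "nat \<Rightarrow> (nat \<Rightarrow> nat \<Rightarrow> int) \<Rightarrow> (nat \<Rightarrow> real) \<Rightarrow> nat \<Rightarrow> (nat \<Rightarrow> real) set" where
  "U_c n A d aff = {v. (\<forall>j. n \<le> j \<longrightarrow> v j = 0) \<and> Kform n A d (gamma_c n A d aff) v = 0}"

end

theory Submission
  imports Defs "Jordan_Normal_Form.Determinant"
begin

lemma kernel_half:
  fixes M :: "nat \<Rightarrow> nat \<Rightarrow> int" and u w :: "nat \<Rightarrow> real"
  assumes off: "\<forall>i<n. \<forall>j<n. i \<noteq> j \<longrightarrow> M i j \<le> 0"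
    and ind: "indecomposable n M"
    and u: "\<forall>i<n. u i > 0" and nul: "\<forall>i<n. (\<Sum>j<n. of_int (M i j) * u j) = 0"
    and p: "p < n" and wp: "w p = 0"
    and w: "\<forall>i<n. i \<noteq> p \<longrightarrow> (\<Sum>j<n. of_int (M i j) * w j) = 0"
  shows "\<forall>i<n. w i \<ge> 0"
proof (rule ccontr)
  assume "\<not> (\<forall>i<n. w i \<ge> 0)"
  then obtain i1 where i1: "i1 < n" "w i1 < 0" by auto
  define t where "t = Min ((\<lambda>i. w i / u i) ` {..<n})"
  have fin: "finite ((\<lambda>i. w i / u i) ` {..<n})" by simp
  have ne: "(\<lambda>i. w i / u i) ` {..<n} \<noteq> {}" using p by auto
  have tle: "\<And>i. i < n \<Longrightarrow> t \<le> w i / u i" unfolding t_def using fin by auto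
  obtain i0 where i0: "i0 < n" "t = w i0 / u i0" using Min_in[OF fin ne] unfolding t_def by auto
  have "w i1 / u i1 < 0" using i1 u by (simp add: divide_neg_pos)
  hence tneg: "t < 0" using tle[OF i1(1)] by linarith
  define v where "v = (\<lambda>i. w i - t * u i)"
  have vnn: "\<And>i. i < n \<Longrightarrow> v i \<ge> 0"
  proof -
    fix i assume i: "i < n"
    have "t \<le> w i / u i" by (rule tle[OF i])
    hence "t * u i \<le> w i" using u i by (simp add: pos_le_divide_eq)
    thus "v i \<ge> 0" unfolding v_def by simp
  qed
  define S where "S = {i. i < n \<and> v i = 0}"
  have i0S: "i0 \<in> S" unfolding S_def v_def using i0 u by auto
  have "t * u p < 0" using tneg u p by (simp add: mult_neg_pos)
  hence pS: "p \<notin> S" unfolding S_def v_def using wp by auto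
  have closed: "\<forall>i\<in>S. \<forall>j\<in>{..<n} - S. M i j = 0"
  proof (intro ballI)
    fix i j assume iS: "i \<in> S" and jS: "j \<in> {..<n} - S"
    have iN: "i < n" "v i = 0" "i \<noteq> p" using iS pS unfolding S_def by auto
    have jN: "j < n" "v j > 0" using jS vnn unfolding S_def by force+
    have "(\<Sum>k<n. of_int (M i k) * v k) = (\<Sum>k<n. of_int (M i k) * w k) - t * (\<Sum>k<n. of_int (M i k) * u k)"
      unfolding v_def by (simp add: right_diff_distrib sum_subtractf sum_distrib_left mult.left_commute)
    also have "\<dots> = 0" using w nul iN by simp
    finally have s0: "(\<Sum>k<n. of_int (M i k) * v k) = 0" .
    have tnp: "\<forall>k\<in>{..<n}. of_int (M i k) * v k \<le> 0"
    proof
      fix k assume k: "k \<in> {..<n}"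
      show "of_int (M i k) * v k \<le> 0"
      proof (cases "k = i")
        case True thus ?thesis using iN by simp
      next
        case False
        hence "of_int (M i k) \<le> (0::real)" using off iN k by auto
        thus ?thesis using vnn k by (simp add: mult_nonpos_nonneg)
      qed
    qed
    have "(\<Sum>k<n. - (of_int (M i k) * v k)) = 0" using s0 by (simp add: sum_negf)
    moreover have nn: "\<And>k. k\<in>{..<n} \<Longrightarrow> - (of_int (M i k) * v k) \<ge> 0" using tnp by auto
    ultimately have "\<forall>k\<in>{..<n}. - (of_int (M i k) * v k) = 0"
      using sum_nonneg_eq_0_iff[OF finite_lessThan nn] by simp
    hence "of_int (M i j) * v j = 0" using jN by auto
    thus "M i j = 0" using jN by simp
  qed
  have S1: "S \<subseteq> {..<n}" unfolding S_def by auto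
  have S2: "S \<noteq> {}" using i0S by auto
  have S3: "S \<noteq> {..<n}" using pS p by auto
  from S1 S2 S3 have "S \<subseteq> {..<n} \<and> S \<noteq> {} \<and> S \<noteq> {..<n} \<and> (\<forall>i\<in>S. \<forall>j\<in>{..<n} - S. M i j = 0)" using closed by simp
  hence "\<exists>S. S \<subseteq> {..<n} \<and> S \<noteq> {} \<and> S \<noteq> {..<n} \<and> (\<forall>i\<in>S. \<forall>j\<in>{..<n} - S. M i j = 0)" by (rule exI)
  with ind show False unfolding indecomposable_def by (rule notE)
qed

lemma kernel_zero:
  fixes M :: "nat \<Rightarrow> nat \<Rightarrow> int" and u w :: "nat \<Rightarrow> real"
  assumes off: "\<forall>i<n. \<forall>j<n. i \<noteq> j \<longrightarrow> M i j \<le> 0"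
    and ind: "indecomposable n M"
    and u: "\<forall>i<n. u i > 0" and nul: "\<forall>i<n. (\<Sum>j<n. of_int (M i j) * u j) = 0"
    and p: "p < n" and wp: "w p = 0"
    and w: "\<forall>i<n. i \<noteq> p \<longrightarrow> (\<Sum>j<n. of_int (M i j) * w j) = 0"
  shows "\<forall>i<n. w i = 0"
proof -
  have a: "\<forall>i<n. w i \<ge> 0" by (rule kernel_half[OF off ind u nul p wp w])
  have b: "\<forall>i<n. - w i \<ge> 0"
    by (rule kernel_half[OF off ind u nul p, of "\<lambda>i. - w i"]) (use wp w in \<open>auto simp: sum_negf\<close>)
  show ?thesis using a b by force
qed

lemma kernel_one:
  fixes M :: "nat \<Rightarrow> nat \<Rightarrow> int" and u w :: "nat \<Rightarrow> real"
  assumes off: "\<forall>i<n. \<forall>j<n. i \<noteq> j \<longrightarrow> M i j \<le> 0"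
    and ind: "indecomposable n M"
    and u: "\<forall>i<n. u i > 0" and nul: "\<forall>i<n. (\<Sum>j<n. of_int (M i j) * u j) = 0"
    and n: "0 < n"
    and w: "\<forall>i<n. (\<Sum>j<n. of_int (M i j) * w j) = 0"
  shows "\<exists>t. \<forall>i<n. w i = t * u i"
proof -
  define t where "t = w 0 / u 0"
  define w' where "w' = (\<lambda>i. w i - t * u i)"
  have "\<forall>i<n. w' i = 0"
  proof (rule kernel_zero[OF off ind u nul n])
    have "u 0 > 0" using u n by simp
    thus "w' 0 = 0" unfolding w'_def t_def by simp
    show "\<forall>i<n. i \<noteq> 0 \<longrightarrow> (\<Sum>j<n. of_int (M i j) * w' j) = 0"
    proof (intro allI impI)
      fix i assume i: "i < n" "i \<noteq> 0"
      have "(\<Sum>j<n. of_int (M i j) * w' j) = (\<Sum>j<n. of_int (M i j) * w j) - t * (\<Sum>j<n. of_int (M i j) * u j)"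
        unfolding w'_def by (simp add: right_diff_distrib sum_subtractf sum_distrib_left mult.left_commute)
      thus "(\<Sum>j<n. of_int (M i j) * w' j) = 0" using w nul i by simp
    qed
  qed
  thus ?thesis unfolding w'_def by auto
qed

definition Pc :: "nat \<Rightarrow> (nat \<Rightarrow> nat \<Rightarrow> int) \<Rightarrow> (nat \<Rightarrow> real) \<Rightarrow> nat \<Rightarrow> (nat \<Rightarrow> real) \<Rightarrow> (nat \<Rightarrow> real)" where
  "Pc n A d m v = foldr (sref n A d) [m..<n] v"

definition Uc :: "(nat \<Rightarrow> nat \<Rightarrow> int) \<Rightarrow> nat \<Rightarrow> nat \<Rightarrow> real" where
  "Uc A i k = (if i < k then of_int (A i k) else if i = k then 1 else 0)"

definition Ec :: "(nat \<Rightarrow> nat \<Rightarrow> int) \<Rightarrow> nat \<Rightarrow> nat \<Rightarrow> real" where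
  "Ec A i k = (if i > k then of_int (A i k) else if i = k then 1 else 0)"

lemma Kform_coroot:
  assumes "d i \<noteq> 0" "i < n"
  shows "Kform n A d (simple_coroot d i) w = (\<Sum>j<n. of_int (A i j) * w j)"
proof -
  have "\<And>a. (\<Sum>b<n. d a * of_int (A a b) * simple_coroot d i a * w b) =
        (if a = i then (\<Sum>b<n. of_int (A i b) * w b) else 0)"
    using assms(1) by (auto simp: simple_coroot_def simple_root_def)
  hence "Kform n A d (simple_coroot d i) w = (\<Sum>a<n. if a = i then (\<Sum>b<n. of_int (A i b) * w b) else 0)"
    unfolding Kform_def by simp
  also have "\<dots> = (\<Sum>j<n. of_int (A i j) * w j)" using assms(2) by simp
  finally show ?thesis .
qed

lemma sref_eq:
  assumes "d i \<noteq> 0" "i < n"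
  shows "sref n A d i w = (\<lambda>j. w j - (if j = i then (\<Sum>k<n. of_int (A i k) * w k) else 0))"
proof -
  have "Kform n A d (simple_coroot d i) w = (\<Sum>j<n. of_int (A i j) * w j)" by (rule Kform_coroot) (use assms in auto)
  thus ?thesis by (auto simp: sref_def simple_root_def)
qed

lemma Pc_ge: "n \<le> m \<Longrightarrow> Pc n A d m v = v"
  unfolding Pc_def by simp

lemma Pc_step: "m < n \<Longrightarrow> Pc n A d m v = sref n A d m (Pc n A d (Suc m) v)"
  unfolding Pc_def by (simp add: upt_conv_Cons)

lemma Pc_L1:
  assumes dpos: "\<forall>i<n. d i \<noteq> 0"
  shows "j < m \<or> n \<le> j \<Longrightarrow> Pc n A d m v j = v j"
proof (induction "n - m" arbitrary: m)
  case 0 thus ?case by (simp add: Pc_ge)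
next
  case (Suc x)
  hence m: "m < n" by simp
  have "Pc n A d (Suc m) v j = v j" using Suc by auto
  moreover have "j \<noteq> m" using Suc m by auto
  ultimately show ?case using m dpos by (simp add: Pc_step sref_eq)
qed

lemma Pc_L2:
  assumes dpos: "\<forall>i<n. d i \<noteq> 0"
  shows "m \<le> j \<Longrightarrow> Pc n A d m v j = Pc n A d j v j"
proof (induction "j - m" arbitrary: m)
  case 0 thus ?case by simp
next
  case (Suc x)
  show ?case
  proof (cases "n \<le> j")
    case True thus ?thesis using Pc_L1[OF dpos] by simp
  next
    case False
    hence m: "m < n" "m \<noteq> j" using Suc by auto
    have "Pc n A d (Suc m) v j = Pc n A d j v j" using Suc by auto
    thus ?thesis using m dpos by (simp add: Pc_step sref_eq)
  qed
qed

lemma cox_Pc: "cox n A d v = Pc n A d 0 v"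
  unfolding cox_def Pc_def by simp

lemma cox_out:
  assumes dpos: "\<forall>i<n. d i \<noteq> 0" and "n \<le> j"
  shows "cox n A d v j = v j"
  using Pc_L1[OF dpos] assms(2) by (simp add: cox_Pc)

lemma cox_ID:
  assumes dpos: "\<forall>i<n. d i \<noteq> 0" and diag: "\<forall>i<n. A i i = 2" and i: "i < n"
  shows "(\<Sum>k<n. Uc A i k * cox n A d v k) = - (\<Sum>k<n. Ec A i k * v k)"
proof -
  define w where "w = cox n A d v"
  have wk: "\<And>k. k < n \<Longrightarrow> w k = Pc n A d k v k"
    unfolding w_def cox_Pc by (rule Pc_L2[OF dpos]) simp
  have Psi: "\<And>k. k < n \<Longrightarrow> Pc n A d (Suc i) v k = (if k \<le> i then v k else w k)"
  proof -
    fix k assume k: "k < n"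
    show "Pc n A d (Suc i) v k = (if k \<le> i then v k else w k)"
    proof (cases "k \<le> i")
      case True thus ?thesis using Pc_L1[OF dpos] by simp
    next
      case False
      have "Pc n A d (Suc i) v k = Pc n A d k v k" by (rule Pc_L2[OF dpos]) (use False in simp)
      thus ?thesis using wk k False by simp
    qed
  qed
  define X where "X = (\<Sum>k<n. of_int (A i k) * (if k \<le> i then v k else w k))"
  have wi: "w i = v i - X"
  proof -
    define P' where "P' = Pc n A d (Suc i) v"
    have e0: "w i = Pc n A d i v i" using wk i by simp
    have e1: "Pc n A d i v = sref n A d i P'" unfolding P'_def by (rule Pc_step[OF i])
    have e2: "sref n A d i P' = (\<lambda>j. P' j - (if j = i then (\<Sum>k<n. of_int (A i k) * P' k) else 0))"
      by (rule sref_eq) (use dpos i in auto)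
    have e3: "P' i = v i" unfolding P'_def by (rule Pc_L1[OF dpos]) simp
    have e4: "(\<Sum>k<n. of_int (A i k) * P' k) = X" unfolding X_def P'_def
      by (rule sum.cong) (simp_all add: Psi)
    show ?thesis using e0 e1 e2 e3 e4 by simp
  qed
  have tm: "Uc A i k * w k + Ec A i k * v k =
      of_int (A i k) * (if k \<le> i then v k else w k) + (if k = i then w i - v i else 0)" if k: "k < n" for k
  proof (cases k i rule: linorder_cases)
    case less thus ?thesis by (simp add: Uc_def Ec_def)
  next
    case equal thus ?thesis using diag i by (simp add: Uc_def Ec_def)
  next
    case greater thus ?thesis by (simp add: Uc_def Ec_def)
  qed
  have "(\<Sum>k<n. Uc A i k * w k) + (\<Sum>k<n. Ec A i k * v k) = (\<Sum>k<n. Uc A i k * w k + Ec A i k * v k)"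
    by (simp add: sum.distrib)
  also have "\<dots> = (\<Sum>k<n. of_int (A i k) * (if k \<le> i then v k else w k) + (if k = i then w i - v i else 0))"
    using tm by (intro sum.cong) auto
  also have "\<dots> = X + (w i - v i)" unfolding X_def using i by (simp add: sum.distrib)
  also have "\<dots> = 0" using wi by simp
  finally show ?thesis unfolding w_def by linarith
qed

lemma Uc_inj:
  assumes "\<forall>i<n. (\<Sum>k<n. Uc A i k * w k) = 0"
  shows "\<forall>i<n. w i = 0"
proof -
  have "w i = 0" if "i < n" for i
    using that
  proof (induction "n - i" arbitrary: i rule: less_induct)
    case (less i)
    have z: "\<And>k. k < n \<Longrightarrow> i < k \<Longrightarrow> w k = 0" using less by auto
    have "(\<Sum>k<n. Uc A i k * w k) = (\<Sum>k<n. if k = i then w i else 0)"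
      by (intro sum.cong) (auto simp: Uc_def z)
    also have "\<dots> = w i" using less by simp
    finally show ?case using assms less by simp
  qed
  thus ?thesis by auto
qed

lemma Ecform_Ec: "Ecform n A d u v = (\<Sum>i<n. \<Sum>j<n. d i * Ec A i j * u i * v j)"
  unfolding Ecform_def Ec_def by simp

lemma Kform_gamma:
  assumes sym: "\<forall>i<n. \<forall>j<n. d i * of_int (A i j) = d j * of_int (A j i)"
    and eq: "\<forall>i<n. (\<Sum>j<n. of_int (A i j) * g j) = (\<Sum>j<n. Ec A i j * e j)"
  shows "Kform n A d g v = Ecform n A d v e"
proof -
  have "Kform n A d g v = (\<Sum>j<n. \<Sum>i<n. d i * of_int (A i j) * g i * v j)"
    unfolding Kform_def by (rule sum.swap)
  also have "\<dots> = (\<Sum>j<n. d j * v j * (\<Sum>i<n. of_int (A j i) * g i))"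
  proof (rule sum.cong[OF HOL.refl])
    fix j assume j: "j \<in> {..<n}"
    have "(\<Sum>i<n. d i * of_int (A i j) * g i * v j) = (\<Sum>i<n. d j * v j * (of_int (A j i) * g i))"
    proof (rule sum.cong[OF HOL.refl])
      fix i assume i: "i \<in> {..<n}"
      have "d i * of_int (A i j) = d j * of_int (A j i)" using sym i j by auto
      thus "d i * of_int (A i j) * g i * v j = d j * v j * (of_int (A j i) * g i)"
        by (metis mult.commute mult.left_commute)
    qed
    thus "(\<Sum>i<n. d i * of_int (A i j) * g i * v j) = d j * v j * (\<Sum>i<n. of_int (A j i) * g i)"
      by (simp add: sum_distrib_left)
  qed
  also have "\<dots> = (\<Sum>j<n. d j * v j * (\<Sum>k<n. Ec A j k * e k))"
    using eq by (intro sum.cong) auto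
  also have "\<dots> = Ecform n A d v e"
    unfolding Ecform_Ec by (simp add: sum_distrib_left mult.commute mult.left_commute)
  finally show ?thesis .
qed

lemma Ecform_sym:
  assumes sym: "\<forall>i<n. \<forall>j<n. d i * of_int (A i j) = d j * of_int (A j i)"
    and diag: "\<forall>i<n. A i i = 2"
  shows "Ecform n A d u v + Ecform n A d v u = Kform n A d u v"
proof -
  have "Ecform n A d v u = (\<Sum>j<n. \<Sum>i<n. d j * Ec A j i * v j * u i)"
    unfolding Ecform_Ec by (rule HOL.refl)
  also have "\<dots> = (\<Sum>i<n. \<Sum>j<n. d j * Ec A j i * v j * u i)" by (rule sum.swap)
  finally have e: "Ecform n A d v u = (\<Sum>i<n. \<Sum>j<n. d j * Ec A j i * v j * u i)" .
  have "Ecform n A d u v + Ecform n A d v u =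
        (\<Sum>i<n. \<Sum>j<n. d i * Ec A i j * u i * v j + d j * Ec A j i * v j * u i)"
    unfolding e unfolding Ecform_Ec by (simp add: sum.distrib)
  also have "\<dots> = (\<Sum>i<n. \<Sum>j<n. d i * of_int (A i j) * u i * v j)"
  proof (intro sum.cong HOL.refl)
    fix i j assume i: "i \<in> {..<n}" and j: "j \<in> {..<n}"
    have s: "d i * of_int (A i j) = d j * of_int (A j i)" using sym i j by auto
    have c: "d i * Ec A i j + d j * Ec A j i = d i * of_int (A i j)"
    proof (cases i j rule: linorder_cases)
      case less thus ?thesis using s by (simp add: Ec_def)
    next
      case equal thus ?thesis using diag i by (simp add: Ec_def)
    next
      case greater thus ?thesis by (simp add: Ec_def)
    qed
    have "d i * Ec A i j * u i * v j + d j * Ec A j i * v j * u i = (d i * Ec A i j + d j * Ec A j i) * u i * v j"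
      by (simp add: algebra_simps)
    thus "d i * Ec A i j * u i * v j + d j * Ec A j i * v j * u i = d i * of_int (A i j) * u i * v j"
      using c by simp
  qed
  also have "\<dots> = Kform n A d u v" unfolding Kform_def ..
  finally show ?thesis .
qed

lemma Kform_null:
  assumes "\<forall>i<n. (\<Sum>j<n. of_int (A i j) * e j) = 0"
  shows "Kform n A d v e = 0"
proof -
  have "Kform n A d v e = (\<Sum>i<n. d i * v i * (\<Sum>j<n. of_int (A i j) * e j))"
    unfolding Kform_def by (simp add: sum_distrib_left mult.commute mult.left_commute)
  also have "\<dots> = 0" using assms by simp
  finally show ?thesis .
qed

lemma Ecform_scale:
  assumes "\<forall>i<n. u i = t * u' i"
  shows "Ecform n A d u v = t * Ecform n A d u' v"
proof -
  have "Ecform n A d u v = (\<Sum>i<n. \<Sum>j<n. t * (d i * Ec A i j * u' i * v j))"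
    unfolding Ecform_Ec using assms by (intro sum.cong HOL.refl) (simp_all add: algebra_simps)
  thus ?thesis unfolding Ecform_Ec by (simp add: sum_distrib_left)
qed

lemma mat_vec_idx:
  assumes "i < n" "v \<in> carrier_vec n"
  shows "(mat n n f *\<^sub>v v) $ i = (\<Sum>j<n. f (i, j) * v $ j)"
  using assms by (simp add: scalar_prod_def atLeast0LessThan)

lemma solve_det:
  assumes B: "(B :: 'a :: field mat) \<in> carrier_mat n n" and dB: "det B \<noteq> 0" and c: "c \<in> carrier_vec n"
  shows "\<exists>x \<in> carrier_vec n. B *\<^sub>v x = c"
proof -
  have "B \<in> Units (ring_mat TYPE('a) n ())" by (rule det_non_zero_imp_unit[OF B dB])
  then obtain C where C: "C \<in> carrier_mat n n" and BC: "B * C = 1\<^sub>m n"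
    unfolding Units_def ring_mat_def by auto
  show ?thesis
    by (rule bexI[of _ "C *\<^sub>v c"]) (use B C BC c in \<open>auto simp: assoc_mult_mat_vec[symmetric]\<close>)
qed

definition Bmat :: "nat \<Rightarrow> (nat \<Rightarrow> nat \<Rightarrow> int) \<Rightarrow> nat \<Rightarrow> int mat" where
  "Bmat n M p = mat n n (\<lambda>(i,j). if i = p then (if j = p then 1 else 0) else M i j)"

lemma Bmat_det:
  fixes M :: "nat \<Rightarrow> nat \<Rightarrow> int" and u :: "nat \<Rightarrow> real"
  assumes off: "\<forall>i<n. \<forall>j<n. i \<noteq> j \<longrightarrow> M i j \<le> 0"
    and ind: "indecomposable n M"
    and u: "\<forall>i<n. u i > 0" and nul: "\<forall>i<n. (\<Sum>j<n. of_int (M i j) * u j) = 0"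
    and p: "p < n"
  shows "det (Bmat n M p) \<noteq> 0"
proof
  assume d0: "det (Bmat n M p) = 0"
  let ?R = "map_mat (of_int :: int \<Rightarrow> real) (Bmat n M p)"
  have R: "?R \<in> carrier_mat n n" unfolding Bmat_def by simp
  have "det ?R = 0" using d0 by simp
  then obtain v where v: "v \<in> carrier_vec n" "v \<noteq> 0\<^sub>v n" "?R *\<^sub>v v = 0\<^sub>v n"
    using det_0_iff_vec_prod_zero_field[OF R] by blast
  have Req: "?R = mat n n (\<lambda>(i,j). of_int (if i = p then (if j = p then 1 else 0) else M i j))"
    unfolding Bmat_def by (rule eq_matI) auto
  have row: "(\<Sum>j<n. of_int (if i = p then (if j = p then 1 else 0) else M i j) * v $ j) = (0::real)"
    if i: "i < n" for i
  proof -
    have "(?R *\<^sub>v v) $ i = 0" using v(3) i by simp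
    thus ?thesis unfolding Req using mat_vec_idx[OF i v(1)] by simp
  qed
  define w where "w = (\<lambda>j. v $ j)"
  have rp: "\<And>j. of_int (if p = p then (if j = p then 1 else 0) else M p j) * v $ j = (if j = p then v $ j else (0::real))"
    by simp
  have wp: "w p = 0" using row[OF p] p unfolding w_def rp by simp
  have wr: "\<forall>i<n. i \<noteq> p \<longrightarrow> (\<Sum>j<n. of_int (M i j) * w j) = 0"
    unfolding w_def by (intro allI impI) (drule row, simp)
  have "\<forall>i<n. w i = 0" by (rule kernel_zero[OF off ind u nul p wp wr])
  hence "v = 0\<^sub>v n" using v(1) unfolding w_def by (intro eq_vecI) auto
  with v(2) show False by simp
qed

lemma solve_real:
  fixes M :: "nat \<Rightarrow> nat \<Rightarrow> int" and u b :: "nat \<Rightarrow> real"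
  assumes off: "\<forall>i<n. \<forall>j<n. i \<noteq> j \<longrightarrow> M i j \<le> 0"
    and ind: "indecomposable n M"
    and u: "\<forall>i<n. u i > 0" and nul: "\<forall>i<n. (\<Sum>j<n. of_int (M i j) * u j) = 0"
    and p: "p < n"
  shows "\<exists>x::nat \<Rightarrow> real. x p = 0 \<and> (\<forall>i<n. i \<noteq> p \<longrightarrow> (\<Sum>j<n. of_int (M i j) * x j) = b i)"
proof -
  let ?R = "map_mat (of_int :: int \<Rightarrow> real) (Bmat n M p)"
  have R: "?R \<in> carrier_mat n n" unfolding Bmat_def by simp
  have "det ?R \<noteq> 0" using Bmat_det[OF off ind u nul p] by simp
  then obtain x where x: "x \<in> carrier_vec n" "?R *\<^sub>v x = vec n (\<lambda>i. if i = p then 0 else b i)"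
    using solve_det[OF R, of "vec n (\<lambda>i. if i = p then 0 else b i)"] by auto
  have Req: "?R = mat n n (\<lambda>(i,j). of_int (if i = p then (if j = p then 1 else 0) else M i j))"
    unfolding Bmat_def by (rule eq_matI) auto
  have row: "(\<Sum>j<n. of_int (if i = p then (if j = p then 1 else 0) else M i j) * x $ j) = (if i = p then 0 else b i)"
    if i: "i < n" for i
  proof -
    have "(?R *\<^sub>v x) $ i = (if i = p then 0 else b i)" using x(2) i by simp
    thus ?thesis unfolding Req using mat_vec_idx[OF i x(1)] by simp
  qed
  show ?thesis
  proof (intro exI conjI)
    have rp: "\<And>j. of_int (if p = p then (if j = p then 1 else 0) else M p j) * x $ j = (if j = p then x $ j else (0::real))"
      by simp
    show "x $ p = 0" using row[OF p] p unfolding rp by simp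
    show "\<forall>i<n. i \<noteq> p \<longrightarrow> (\<Sum>j<n. of_int (M i j) * x $ j) = b i"
      by (intro allI impI) (drule row, simp)
  qed
qed

lemma solve_rat:
  fixes M :: "nat \<Rightarrow> nat \<Rightarrow> int" and u :: "nat \<Rightarrow> real"
  assumes off: "\<forall>i<n. \<forall>j<n. i \<noteq> j \<longrightarrow> M i j \<le> 0"
    and ind: "indecomposable n M"
    and u: "\<forall>i<n. u i > 0" and nul: "\<forall>i<n. (\<Sum>j<n. of_int (M i j) * u j) = 0"
    and p: "p < n"
  shows "\<exists>x::nat \<Rightarrow> rat. x p = 1 \<and> (\<forall>i<n. i \<noteq> p \<longrightarrow> (\<Sum>j<n. of_int (M i j) * x j) = 0)"
proof -
  let ?R = "map_mat (of_int :: int \<Rightarrow> rat) (Bmat n M p)"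
  have R: "?R \<in> carrier_mat n n" unfolding Bmat_def by simp
  have "det ?R \<noteq> 0" using Bmat_det[OF off ind u nul p] by simp
  then obtain x where x: "x \<in> carrier_vec n" "?R *\<^sub>v x = vec n (\<lambda>i. if i = p then 1 else 0)"
    using solve_det[OF R, of "vec n (\<lambda>i. if i = p then 1 else 0)"] by auto
  have Req: "?R = mat n n (\<lambda>(i,j). of_int (if i = p then (if j = p then 1 else 0) else M i j))"
    unfolding Bmat_def by (rule eq_matI) auto
  have row: "(\<Sum>j<n. of_int (if i = p then (if j = p then 1 else 0) else M i j) * x $ j) = (if i = p then 1 else 0)"
    if i: "i < n" for i
  proof -
    have "(?R *\<^sub>v x) $ i = (if i = p then 1 else 0)" using x(2) i by simp
    thus ?thesis unfolding Req using mat_vec_idx[OF i x(1)] by simp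
  qed
  show ?thesis
  proof (intro exI conjI)
    have rp: "\<And>j. of_int (if p = p then (if j = p then 1 else 0) else M p j) * x $ j = (if j = p then x $ j else (0::rat))"
      by simp
    show "x $ p = 1" using row[OF p] p unfolding rp by simp
    show "\<forall>i<n. i \<noteq> p \<longrightarrow> (\<Sum>j<n. of_int (M i j) * x $ j) = 0"
      by (intro allI impI) (drule row, simp)
  qed
qed

definition NR :: "nat \<Rightarrow> (nat \<Rightarrow> nat \<Rightarrow> int) \<Rightarrow> (nat \<Rightarrow> real) \<Rightarrow> bool" where
  "NR n M v \<longleftrightarrow> (\<forall>i. n \<le> i \<longrightarrow> v i = 0) \<and> (\<forall>i<n. v i \<in> \<int> \<and> v i > 0) \<and>
      (\<forall>i<n. (\<Sum>j<n. of_int (M i j) * v j) = 0) \<and>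
      (\<forall>w. (\<forall>i. n \<le> i \<longrightarrow> w i = 0) \<and> (\<forall>i<n. w i \<in> \<int>) \<and>
           (\<forall>i<n. (\<Sum>j<n. of_int (M i j) * w j) = 0) \<longrightarrow> (\<exists>k\<in>\<int>. \<forall>i. w i = k * v i))"

lemma null_root_NR: "null_root n M = The (NR n M)"
  unfolding null_root_def NR_def ..

definition SP :: "nat \<Rightarrow> (nat \<Rightarrow> nat \<Rightarrow> int) \<Rightarrow> (nat \<Rightarrow> real) \<Rightarrow> bool" where
  "SP n M v \<longleftrightarrow> (\<forall>i. n \<le> i \<longrightarrow> v i = 0) \<and> (\<forall>i<n. v i \<in> \<int> \<and> v i > 0) \<and>
      (\<forall>i<n. (\<Sum>j<n. of_int (M i j) * v j) = 0)"

lemma rat_scale_int: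
  fixes q :: "nat \<Rightarrow> rat" and n :: nat
  defines "N \<equiv> (\<Prod>j<n. (of_int (snd (quotient_of (q j))) :: rat))"
  shows "N > 0" and "\<And>i. i < n \<Longrightarrow> \<exists>z. q i * N = of_int z"
proof -
  have bpos: "\<And>j. snd (quotient_of (q j)) > 0"
    by (metis prod.collapse quotient_of_denom_pos)
  show "N > 0" unfolding N_def using bpos by (intro prod_pos) auto
  fix i assume i: "i < n"
  obtain a b where ab: "quotient_of (q i) = (a, b)" by (cases "quotient_of (q i)")
  have qi: "q i = of_int a / of_int b" by (rule quotient_of_div[OF ab])
  have b0: "b > 0" using quotient_of_denom_pos[OF ab] .
  have "N = of_int (snd (quotient_of (q i))) * (\<Prod>j\<in>{..<n} - {i}. of_int (snd (quotient_of (q j))))"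
    unfolding N_def using i by (subst prod.remove[of _ i]) auto
  also have "\<dots> = of_int b * of_int (\<Prod>j\<in>{..<n} - {i}. snd (quotient_of (q j)))"
    using ab by (simp add: of_int_prod)
  finally have "q i * N = of_int a * of_int (\<Prod>j\<in>{..<n} - {i}. snd (quotient_of (q j)))"
    using qi b0 by simp
  thus "\<exists>z. q i * N = of_int z" by (metis of_int_mult)
qed

lemma NR_mult:
  assumes a: "NR n M v" and b: "NR n M v'"
  shows "\<exists>k\<in>\<int>. \<forall>i. v' i = k * v i"
proof -
  have c4: "\<forall>w. (\<forall>i. n \<le> i \<longrightarrow> w i = 0) \<and> (\<forall>i<n. w i \<in> \<int>) \<and>
           (\<forall>i<n. (\<Sum>j<n. of_int (M i j) * w j) = 0) \<longrightarrow> (\<exists>k\<in>\<int>. \<forall>i. w i = k * v i)"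
    using a unfolding NR_def by (elim conjE)
  have p1: "\<forall>i. n \<le> i \<longrightarrow> v' i = 0" using b unfolding NR_def by (elim conjE) assumption
  have p2: "\<forall>i<n. v' i \<in> \<int> \<and> v' i > 0" using b unfolding NR_def by (elim conjE) assumption
  have p3: "\<forall>i<n. (\<Sum>j<n. of_int (M i j) * v' j) = 0" using b unfolding NR_def by (elim conjE) assumption
  have p2': "\<forall>i<n. v' i \<in> \<int>" using p2 by simp
  show ?thesis using c4[rule_format, OF conjI[OF p1 conjI[OF p2' p3]]] .
qed

lemma NR_exists_unique:
  fixes M :: "nat \<Rightarrow> nat \<Rightarrow> int" and u y :: "nat \<Rightarrow> real"
  assumes off: "\<forall>i<n. \<forall>j<n. i \<noteq> j \<longrightarrow> M i j \<le> 0"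
    and ind: "indecomposable n M"
    and u: "\<forall>i<n. u i > 0" and nul: "\<forall>i<n. (\<Sum>j<n. of_int (M i j) * u j) = 0"
    and y0: "y 0 \<noteq> 0" and lnul: "\<forall>j<n. (\<Sum>i<n. y i * of_int (M i j)) = 0"
    and n: "0 < n"
  shows "\<exists>!v. NR n M v"
proof -
  obtain q :: "nat \<Rightarrow> rat" where q: "q 0 = 1" "\<forall>i<n. i \<noteq> 0 \<longrightarrow> (\<Sum>j<n. of_int (M i j) * q j) = 0"
    using solve_rat[OF off ind u nul n] by blast
  define r where "r = (\<lambda>j. (of_rat (q j) :: real))"
  have rrow: "\<forall>i<n. i \<noteq> 0 \<longrightarrow> (\<Sum>j<n. of_int (M i j) * r j) = 0"
  proof (intro allI impI)
    fix i assume i: "i < n" "i \<noteq> 0"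
    have "(\<Sum>j<n. of_int (M i j) * r j) = of_rat (\<Sum>j<n. of_int (M i j) * q j)"
      unfolding r_def by (simp add: of_rat_sum of_rat_mult)
    thus "(\<Sum>j<n. of_int (M i j) * r j) = 0" using q i by simp
  qed
  have "(\<Sum>i<n. y i * (\<Sum>j<n. of_int (M i j) * r j)) = (\<Sum>j<n. r j * (\<Sum>i<n. y i * of_int (M i j)))"
  proof -
    have "(\<Sum>i<n. y i * (\<Sum>j<n. of_int (M i j) * r j)) = (\<Sum>i<n. \<Sum>j<n. y i * of_int (M i j) * r j)"
      by (simp add: sum_distrib_left mult.assoc)
    also have "\<dots> = (\<Sum>j<n. \<Sum>i<n. y i * of_int (M i j) * r j)" by (rule sum.swap)
    also have "\<dots> = (\<Sum>j<n. r j * (\<Sum>i<n. y i * of_int (M i j)))"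
      by (simp add: sum_distrib_left mult.commute)
    finally show ?thesis .
  qed
  also have "\<dots> = 0" using lnul by simp
  finally have s: "(\<Sum>i<n. y i * (\<Sum>j<n. of_int (M i j) * r j)) = 0" .
  have "(\<Sum>i<n. y i * (\<Sum>j<n. of_int (M i j) * r j)) = (\<Sum>i<n. if i = 0 then y 0 * (\<Sum>j<n. of_int (M 0 j) * r j) else 0)"
    using rrow by (intro sum.cong HOL.refl) auto
  also have "\<dots> = y 0 * (\<Sum>j<n. of_int (M 0 j) * r j)" using n by simp
  finally have "(\<Sum>j<n. of_int (M 0 j) * r j) = 0" using s y0 by simp
  hence rnul: "\<forall>i<n. (\<Sum>j<n. of_int (M i j) * r j) = 0" using rrow by (metis)
  obtain t where t: "\<forall>i<n. r i = t * u i" using kernel_one[OF off ind u nul n rnul] by blast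
  have "r 0 = 1" unfolding r_def using q by simp
  hence "t * u 0 = 1" using t n by simp
  moreover have "u 0 > 0" using u n by simp
  ultimately have tpos: "t > 0" by (smt (verit) mult_nonpos_nonneg)
  have rpos: "\<forall>i<n. r i > 0" using t u tpos by simp
  define N where "N = (\<Prod>j<n. (of_int (snd (quotient_of (q j))) :: rat))"
  have Npos: "N > 0" and Nint: "\<And>i. i < n \<Longrightarrow> \<exists>z. q i * N = of_int z"
    using rat_scale_int[where q=q and n=n] unfolding N_def by auto
  define v0 where "v0 = (\<lambda>i. if i < n then r i * of_rat N else 0)"
  have SP0: "SP n M v0" unfolding SP_def
  proof (intro conjI allI impI)
    fix i show "n \<le> i \<Longrightarrow> v0 i = 0" unfolding v0_def by simp
  next
    fix i assume i: "i < n"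
    obtain z where z: "q i * N = of_int z" using Nint[OF i] by blast
    have "v0 i = of_rat (q i * N)" unfolding v0_def r_def using i by (simp add: of_rat_mult)
    also have "\<dots> = of_int z" using z by simp
    finally show "v0 i \<in> \<int>" by simp
    show "v0 i > 0" unfolding v0_def using i rpos Npos by simp
  next
    fix i assume i: "i < n"
    have "(\<Sum>j<n. of_int (M i j) * v0 j) = of_rat N * (\<Sum>j<n. of_int (M i j) * r j)"
      unfolding v0_def by (simp add: sum_distrib_left mult.commute mult.left_commute)
    thus "(\<Sum>j<n. of_int (M i j) * v0 j) = 0" using rnul i by simp
  qed
  obtain v where v: "SP n M v" and vmin: "\<forall>w. SP n M w \<longrightarrow> nat \<lfloor>v 0\<rfloor> \<le> nat \<lfloor>w 0\<rfloor>"
    using ex_has_least_nat[of "SP n M" v0 "\<lambda>v. nat \<lfloor>v 0\<rfloor>"] SP0 by blast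
  have vpos: "\<forall>i<n. v i > 0" and vint: "\<forall>i<n. v i \<in> \<int>" and vsup: "\<forall>i. n \<le> i \<longrightarrow> v i = 0"
    and vnul: "\<forall>i<n. (\<Sum>j<n. of_int (M i j) * v j) = 0" using v unfolding SP_def by auto
  have NRv: "NR n M v" unfolding NR_def
  proof (intro conjI)
    show "\<forall>i. n \<le> i \<longrightarrow> v i = 0" "\<forall>i<n. v i \<in> \<int> \<and> 0 < v i" "\<forall>i<n. (\<Sum>j<n. of_int (M i j) * v j) = 0"
      using vpos vint vsup vnul by auto
    show "\<forall>w. (\<forall>i. n \<le> i \<longrightarrow> w i = 0) \<and> (\<forall>i<n. w i \<in> \<int>) \<and>
           (\<forall>i<n. (\<Sum>j<n. of_int (M i j) * w j) = 0) \<longrightarrow> (\<exists>k\<in>\<int>. \<forall>i. w i = k * v i)"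
    proof (intro allI impI)
      fix w :: "nat \<Rightarrow> real" assume w: "(\<forall>i. n \<le> i \<longrightarrow> w i = 0) \<and> (\<forall>i<n. w i \<in> \<int>) \<and> (\<forall>i<n. (\<Sum>j<n. of_int (M i j) * w j) = 0)"
      have wnul: "\<forall>i<n. (\<Sum>j<n. of_int (M i j) * w j) = 0" using w by (elim conjE)
      obtain s where s: "\<forall>i<n. w i = s * v i" using kernel_one[OF off ind vpos vnul n wnul] by (elim exE)
      define f where "f = \<lfloor>s\<rfloor>"
      define rr where "rr = s - of_int f"
      have rr0: "rr \<ge> 0" "rr < 1" unfolding rr_def f_def by linarith+
      have "rr = 0"
      proof (rule ccontr)
        assume "rr \<noteq> 0"
        hence rrp: "rr > 0" using rr0 by simp
        define w' where "w' = (\<lambda>i. w i - of_int f * v i)"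
        have w'eq: "\<forall>i<n. w' i = rr * v i" unfolding w'_def rr_def using s by (simp add: algebra_simps)
        have "SP n M w'" unfolding SP_def
        proof (intro conjI allI impI)
          fix i show "n \<le> i \<Longrightarrow> w' i = 0" unfolding w'_def using w vsup by simp
        next
          fix i assume i: "i < n"
          show "w' i \<in> \<int>" unfolding w'_def using w vint i by (intro Ints_diff Ints_mult) auto
          show "w' i > 0" using w'eq vpos rrp i by simp
        next
          fix i assume i: "i < n"
          have "(\<Sum>j<n. of_int (M i j) * w' j) = (\<Sum>j<n. of_int (M i j) * w j) - of_int f * (\<Sum>j<n. of_int (M i j) * v j)"
            unfolding w'_def by (simp add: right_diff_distrib sum_subtractf sum_distrib_left mult.left_commute)
          thus "(\<Sum>j<n. of_int (M i j) * w' j) = 0" using w vnul i by simp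
        qed
        hence le: "nat \<lfloor>v 0\<rfloor> \<le> nat \<lfloor>w' 0\<rfloor>" using vmin by blast
        have lt: "w' 0 < v 0" using w'eq vpos n rr0 by simp
        have w'0i: "w' 0 \<in> \<int>" "w' 0 > 0" using \<open>SP n M w'\<close> n unfolding SP_def by auto
        obtain a where a: "v 0 = of_int a" using vint n by (metis Ints_cases)
        obtain b where b: "w' 0 = of_int b" using w'0i by (metis Ints_cases)
        have "b < a" "b > 0" using lt w'0i a b by auto
        thus False using le a b by simp
      qed
      hence "s = of_int f" unfolding rr_def by simp
      show "\<exists>k\<in>\<int>. \<forall>i. w i = k * v i"
      proof (intro bexI allI)
        fix i show "w i = s * v i"
          by (cases "i < n") (use s w vsup in auto)
        show "s \<in> \<int>" using \<open>s = of_int f\<close> by simp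
      qed
    qed
  qed
  show ?thesis
  proof (rule ex1I[of _ v])
    show "NR n M v" by (rule NRv)
    fix v' assume v': "NR n M v'"
    obtain k where k: "k \<in> \<int>" "\<forall>i. v' i = k * v i"
      using NR_mult[OF NRv v'] by (elim bexE) simp
    obtain k' where k': "k' \<in> \<int>" "\<forall>i. v i = k' * v' i"
      using NR_mult[OF v' NRv] by (elim bexE) simp
    have p1: "v 0 > 0" "v' 0 > 0" using NRv v' n unfolding NR_def by auto
    have kp: "k > 0" using k(2) p1 by (metis zero_less_mult_pos2)
    have kp': "k' > 0" using k'(2) p1 by (metis zero_less_mult_pos2)
    have "v 0 = k' * k * v 0" using k(2) k'(2) by (metis mult.assoc)
    hence kk: "k' * k = 1" using p1 by simp
    obtain a where a: "k = of_int a" using k(1) by (metis Ints_cases)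
    obtain b where b: "k' = of_int b" using k'(1) by (metis Ints_cases)
    have "a > 0" "b > 0" "b * a = 1" using kp kp' kk a b by (simp_all, metis of_int_1 of_int_eq_iff of_int_mult)
    hence "a = 1" by (metis int_one_le_iff_zero_less mult_le_cancel_right1 not_le order_antisym pos_zmult_eq_1_iff)
    thus "v' = v" using k(2) a by auto
  qed
qed

lemma null_root_props:
  fixes M :: "nat \<Rightarrow> nat \<Rightarrow> int" and u y :: "nat \<Rightarrow> real"
  assumes off: "\<forall>i<n. \<forall>j<n. i \<noteq> j \<longrightarrow> M i j \<le> 0"
    and ind: "indecomposable n M"
    and u: "\<forall>i<n. u i > 0" and nul: "\<forall>i<n. (\<Sum>j<n. of_int (M i j) * u j) = 0"
    and y0: "y 0 \<noteq> 0" and lnul: "\<forall>j<n. (\<Sum>i<n. y i * of_int (M i j)) = 0"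
    and n: "0 < n"
  shows "(\<forall>i. n \<le> i \<longrightarrow> null_root n M i = 0) \<and> (\<forall>i<n. null_root n M i > 0) \<and>
     (\<forall>i<n. (\<Sum>j<n. of_int (M i j) * null_root n M j) = 0)"
proof -
  have "NR n M (null_root n M)" unfolding null_root_NR
    by (rule theI'[OF NR_exists_unique[OF off ind u nul y0 lnul n]])
  thus ?thesis unfolding NR_def by auto
qed

lemma UE_sum:
  assumes diag: "\<forall>i<n. A i i = 2" and i: "i < n"
  shows "(\<Sum>k<n. Uc A i k * x k) + (\<Sum>k<n. Ec A i k * x k) = (\<Sum>k<n. of_int (A i k) * x k)"
proof -
  have "(\<Sum>k<n. Uc A i k * x k) + (\<Sum>k<n. Ec A i k * x k) = (\<Sum>k<n. (Uc A i k + Ec A i k) * x k)"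
    by (simp add: sum.distrib distrib_right)
  also have "\<dots> = (\<Sum>k<n. of_int (A i k) * x k)"
  proof (rule sum.cong[OF HOL.refl])
    fix k assume k: "k \<in> {..<n}"
    have "Uc A i k + Ec A i k = of_int (A i k)"
    proof (cases k i rule: linorder_cases)
      case equal thus ?thesis using diag i by (simp add: Uc_def Ec_def)
    qed (auto simp: Uc_def Ec_def)
    thus "(Uc A i k + Ec A i k) * x k = of_int (A i k) * x k" by simp
  qed
  finally show ?thesis .
qed

lemma G_rows:
  assumes dpos: "\<forall>i<n. d i \<noteq> 0" and diag: "\<forall>i<n. A i i = 2"
    and enul: "\<forall>i<n. (\<Sum>j<n. of_int (A i j) * e j) = 0"
    and cx: "cox n A d g = (\<lambda>j. g j + e j)"
  shows "\<forall>i<n. (\<Sum>j<n. of_int (A i j) * g j) = (\<Sum>j<n. Ec A i j * e j)"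
proof (intro allI impI)
  fix i assume i: "i < n"
  have "(\<Sum>k<n. Uc A i k * cox n A d g k) = - (\<Sum>k<n. Ec A i k * g k)" by (rule cox_ID) (use dpos diag i in auto)
  hence "(\<Sum>k<n. Uc A i k * g k) + (\<Sum>k<n. Uc A i k * e k) = - (\<Sum>k<n. Ec A i k * g k)"
    unfolding cx by (simp add: distrib_left sum.distrib)
  moreover have "(\<Sum>k<n. Uc A i k * e k) + (\<Sum>k<n. Ec A i k * e k) = 0"
    using UE_sum[where A=A and n=n and i=i and x=e, OF diag i] enul i by simp
  moreover have "(\<Sum>k<n. Uc A i k * g k) + (\<Sum>k<n. Ec A i k * g k) = (\<Sum>k<n. of_int (A i k) * g k)"
    by (rule UE_sum[where A=A and n=n and i=i, OF diag i])
  ultimately show "(\<Sum>j<n. of_int (A i j) * g j) = (\<Sum>j<n. Ec A i j * e j)" by linarith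
qed

lemma gamma_exists:
  fixes A :: "nat \<Rightarrow> nat \<Rightarrow> int" and u e :: "nat \<Rightarrow> real"
  assumes dpos: "\<forall>i<n. d i > 0" and diag: "\<forall>i<n. A i i = 2"
    and sym: "\<forall>i<n. \<forall>j<n. d i * of_int (A i j) = d j * of_int (A j i)"
    and off: "\<forall>i<n. \<forall>j<n. i \<noteq> j \<longrightarrow> A i j \<le> 0"
    and ind: "indecomposable n A"
    and u: "\<forall>i<n. u i > 0" and nul: "\<forall>i<n. (\<Sum>j<n. of_int (A i j) * u j) = 0"
    and epos: "\<forall>i<n. e i > 0" and enul: "\<forall>i<n. (\<Sum>j<n. of_int (A i j) * e j) = 0"
    and esup: "\<forall>i. n \<le> i \<longrightarrow> e i = 0"
    and aff: "aff < n"
  shows "\<exists>!g. (\<forall>j. (n \<le> j \<or> j = aff) \<longrightarrow> g j = 0) \<and> cox n A d g = (\<lambda>j. g j + e j)"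
proof -
  have dne: "\<forall>i<n. d i \<noteq> 0" using dpos by auto
  define b where "b = (\<lambda>i. \<Sum>j<n. Ec A i j * e j)"
  obtain x where x0: "x aff = 0" and xr: "\<forall>i<n. i \<noteq> aff \<longrightarrow> (\<Sum>j<n. of_int (A i j) * x j) = b i"
    using solve_real[OF off ind u nul aff, of b] by blast
  define y where "y = (\<lambda>i. d i * e i)"
  have ypos: "y aff > 0" unfolding y_def using dpos epos aff by simp
  have lnul: "\<forall>j<n. (\<Sum>i<n. y i * of_int (A i j)) = 0"
  proof (intro allI impI)
    fix j assume j: "j < n"
    have "(\<Sum>i<n. y i * of_int (A i j)) = (\<Sum>i<n. d j * (of_int (A j i) * e i))"
      unfolding y_def using sym j by (intro sum.cong HOL.refl) (simp add: algebra_simps)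
    also have "\<dots> = d j * (\<Sum>i<n. of_int (A j i) * e i)" by (simp add: sum_distrib_left)
    finally show "(\<Sum>i<n. y i * of_int (A i j)) = 0" using enul j by simp
  qed
  have Eee: "Ecform n A d e e = 0"
  proof -
    have "Ecform n A d e e + Ecform n A d e e = Kform n A d e e" by (rule Ecform_sym[OF sym diag])
    also have "\<dots> = 0" by (rule Kform_null[OF enul])
    finally show ?thesis by simp
  qed
  have yb: "(\<Sum>i<n. y i * b i) = 0"
  proof -
    have "(\<Sum>i<n. y i * b i) = Ecform n A d e e"
      unfolding y_def b_def Ecform_Ec by (simp add: sum_distrib_left mult.assoc mult.left_commute)
    thus ?thesis using Eee by simp
  qed
  have yAx: "(\<Sum>i<n. y i * (\<Sum>j<n. of_int (A i j) * x j)) = 0"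
  proof -
    have "(\<Sum>i<n. y i * (\<Sum>j<n. of_int (A i j) * x j)) = (\<Sum>i<n. \<Sum>j<n. y i * of_int (A i j) * x j)"
      by (simp add: sum_distrib_left mult.assoc)
    also have "\<dots> = (\<Sum>j<n. \<Sum>i<n. y i * of_int (A i j) * x j)" by (rule sum.swap)
    also have "\<dots> = (\<Sum>j<n. x j * (\<Sum>i<n. y i * of_int (A i j)))"
      by (simp add: sum_distrib_left mult.commute)
    also have "\<dots> = 0" using lnul by simp
    finally show ?thesis .
  qed
  have "(\<Sum>i<n. y i * ((\<Sum>j<n. of_int (A i j) * x j) - b i)) = 0"
    using yAx yb by (simp add: right_diff_distrib sum_subtractf)
  moreover have "(\<Sum>i<n. y i * ((\<Sum>j<n. of_int (A i j) * x j) - b i)) =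
      (\<Sum>i<n. if i = aff then y aff * ((\<Sum>j<n. of_int (A aff j) * x j) - b aff) else 0)"
    using xr by (intro sum.cong HOL.refl) auto
  ultimately have "y aff * ((\<Sum>j<n. of_int (A aff j) * x j) - b aff) = 0" using aff by simp
  hence xaff: "(\<Sum>j<n. of_int (A aff j) * x j) = b aff" using ypos by simp
  have xrows: "\<forall>i<n. (\<Sum>j<n. of_int (A i j) * x j) = b i" using xr xaff by metis
  define g where "g = (\<lambda>j. if j < n then x j else 0)"
  have grows: "\<forall>i<n. (\<Sum>j<n. of_int (A i j) * g j) = b i"
    unfolding g_def using xrows by simp
  have gsup: "\<forall>j. (n \<le> j \<or> j = aff) \<longrightarrow> g j = 0" unfolding g_def using x0 by auto
  have gcox: "cox n A d g = (\<lambda>j. g j + e j)"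
  proof
    fix j
    define w where "w = (\<lambda>k. cox n A d g k - g k - e k)"
    have "\<forall>i<n. (\<Sum>k<n. Uc A i k * w k) = 0"
    proof (intro allI impI)
      fix i assume i: "i < n"
      have c: "(\<Sum>k<n. Uc A i k * cox n A d g k) = - (\<Sum>k<n. Ec A i k * g k)" by (rule cox_ID) (use dne diag i in auto)
      have "(\<Sum>k<n. Uc A i k * w k) = (\<Sum>k<n. Uc A i k * cox n A d g k) - (\<Sum>k<n. Uc A i k * g k) - (\<Sum>k<n. Uc A i k * e k)"
        unfolding w_def by (simp add: right_diff_distrib sum_subtractf)
      moreover have "(\<Sum>k<n. Uc A i k * e k) + (\<Sum>k<n. Ec A i k * e k) = 0"
        using UE_sum[where A=A and n=n and i=i and x=e, OF diag i] enul i by simp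
      moreover have "(\<Sum>k<n. Uc A i k * g k) + (\<Sum>k<n. Ec A i k * g k) = b i"
        using UE_sum[where A=A and n=n and i=i and x=g, OF diag i] grows i by simp
      ultimately show "(\<Sum>k<n. Uc A i k * w k) = 0" using c unfolding b_def by linarith
    qed
    hence wz: "\<forall>i<n. w i = 0" by (rule Uc_inj)
    show "cox n A d g j = g j + e j"
    proof (cases "j < n")
      case True thus ?thesis using wz unfolding w_def by auto
    next
      case False thus ?thesis using cox_out[OF dne] esup unfolding g_def by simp
    qed
  qed
  show ?thesis
  proof (rule ex1I[of _ g])
    show "(\<forall>j. (n \<le> j \<or> j = aff) \<longrightarrow> g j = 0) \<and> cox n A d g = (\<lambda>j. g j + e j)" using gsup gcox by simp
    fix g' assume g': "(\<forall>j. (n \<le> j \<or> j = aff) \<longrightarrow> g' j = 0) \<and> cox n A d g' = (\<lambda>j. g' j + e j)"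
    have g'rows: "\<forall>i<n. (\<Sum>j<n. of_int (A i j) * g' j) = (\<Sum>j<n. Ec A i j * e j)"
      by (rule G_rows[OF dne diag enul]) (use g' in simp)
    define w where "w = (\<lambda>j. g' j - g j)"
    have "\<forall>i<n. w i = 0"
    proof (rule kernel_zero[OF off ind u nul aff])
      show "w aff = 0" unfolding w_def using g' gsup by simp
      show "\<forall>i<n. i \<noteq> aff \<longrightarrow> (\<Sum>j<n. of_int (A i j) * w j) = 0"
      proof (intro allI impI)
        fix i assume i: "i < n" "i \<noteq> aff"
        have "(\<Sum>j<n. of_int (A i j) * w j) = (\<Sum>j<n. of_int (A i j) * g' j) - (\<Sum>j<n. of_int (A i j) * g j)"
          unfolding w_def by (simp add: right_diff_distrib sum_subtractf)
        thus "(\<Sum>j<n. of_int (A i j) * w j) = 0" using g'rows grows i unfolding b_def by simp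
      qed
    qed
    thus "g' = g"
    proof -
      assume wz: "\<forall>i<n. w i = 0"
      show "g' = g"
      proof
        fix j show "g' j = g j"
          by (cases "j < n") (use wz g' gsup in \<open>auto simp: w_def\<close>)
      qed
    qed
  qed
qed

theorem proposition2p16:
  fixes n :: nat and A :: "nat \<Rightarrow> nat \<Rightarrow> int" and d :: "nat \<Rightarrow> real"
    and aff :: nat and \<beta> :: "nat \<Rightarrow> real"
  assumes "affine_type n A"
    and "symmetrizer n A d"
    and "aff < n"
    and "\<beta> \<in> roots n A d"
    and "\<beta> \<in> U_c n A d aff"
  shows "Ecform n A d (coroot n A d \<beta>) (delta n A) = 0 \<and>
         Ecform n A d (delta_vee n A d) \<beta> = 0"
proof -
  note aff = assms(3)
  have n: "0 < n" and diag: "\<forall>i<n. A i i = 2" and off: "\<forall>i<n. \<forall>j<n. i \<noteq> j \<longrightarrow> A i j \<le> 0"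
    and zs: "\<forall>i<n. \<forall>j<n. A i j = 0 \<longleftrightarrow> A j i = 0" and ind: "indecomposable n A"
    using assms(1) unfolding affine_type_def gcm_def by auto
  obtain u :: "nat \<Rightarrow> real" where u: "\<forall>i<n. u i > 0" and nul: "\<forall>i<n. (\<Sum>j<n. of_int (A i j) * u j) = 0"
    using assms(1) unfolding affine_type_def by blast
  have dpos: "\<forall>i<n. d i > 0" and sym: "\<forall>i<n. \<forall>j<n. d i * of_int (A i j) = d j * of_int (A j i)"
    using assms(2) unfolding symmetrizer_def by auto
  have dne: "\<forall>i<n. d i \<noteq> 0" using dpos by auto
  have Tnul: "\<forall>i<n. (\<Sum>j<n. of_int (A j i) * (d j * x j)) = 0"
    if x: "\<forall>i<n. (\<Sum>j<n. of_int (A i j) * x j) = 0" for x :: "nat \<Rightarrow> real"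
  proof (intro allI impI)
    fix i assume i: "i < n"
    have "(\<Sum>j<n. of_int (A j i) * (d j * x j)) = (\<Sum>j<n. d i * (of_int (A i j) * x j))"
      using sym i by (intro sum.cong HOL.refl) (simp add: algebra_simps)
    also have "\<dots> = d i * (\<Sum>j<n. of_int (A i j) * x j)" by (simp add: sum_distrib_left)
    finally show "(\<Sum>j<n. of_int (A j i) * (d j * x j)) = 0" using x i by simp
  qed
  have Lnul: "\<forall>j<n. (\<Sum>i<n. (d i * x i) * of_int (A i j)) = 0"
    if x: "\<forall>i<n. (\<Sum>j<n. of_int (A i j) * x j) = 0" for x :: "nat \<Rightarrow> real"
    using Tnul[OF x] by (simp add: mult.commute)
  have offT: "\<forall>i<n. \<forall>j<n. i \<noteq> j \<longrightarrow> (\<lambda>i j. A j i) i j \<le> 0" using off by auto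
  have indT: "indecomposable n (\<lambda>i j. A j i)"
    unfolding indecomposable_def
  proof
    assume "\<exists>S\<subseteq>{..<n}. S \<noteq> {} \<and> S \<noteq> {..<n} \<and> (\<forall>i\<in>S. \<forall>j\<in>{..<n} - S. A j i = 0)"
    then obtain S where S: "S \<subseteq> {..<n}" "S \<noteq> {}" "S \<noteq> {..<n}" "\<forall>i\<in>S. \<forall>j\<in>{..<n} - S. A j i = 0"
      by blast
    have "\<forall>i\<in>S. \<forall>j\<in>{..<n} - S. A i j = 0" using S zs by blast
    thus False using ind S(1-3) unfolding indecomposable_def by blast
  qed
  have d0: "d 0 > 0" "u 0 > 0" using dpos u n by auto
  define e where "e = delta n A"
  have eprops: "(\<forall>i. n \<le> i \<longrightarrow> e i = 0) \<and> (\<forall>i<n. e i > 0) \<and> (\<forall>i<n. (\<Sum>j<n. of_int (A i j) * e j) = 0)"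
    unfolding e_def delta_def
    by (rule null_root_props[OF off ind u nul _ Lnul[OF nul] n]) (use d0 in simp)
  have esup: "\<forall>i. n \<le> i \<longrightarrow> e i = 0" and epos: "\<forall>i<n. e i > 0"
    and enul: "\<forall>i<n. (\<Sum>j<n. of_int (A i j) * e j) = 0" using eprops by auto
  have uT: "\<forall>i<n. d i * u i > 0" using dpos u by simp
  have nulT: "\<forall>i<n. (\<Sum>j<n. of_int ((\<lambda>i j. A j i) i j) * (d j * u j)) = 0" using Tnul[OF nul] by simp
  have lnulT: "\<forall>j<n. (\<Sum>i<n. u i * of_int ((\<lambda>i j. A j i) i j)) = 0"
    using nul by (simp add: mult.commute)
  define e' where "e' = null_root n (\<lambda>i j. A j i)"
  have e'props: "(\<forall>i. n \<le> i \<longrightarrow> e' i = 0) \<and> (\<forall>i<n. e' i > 0) \<and> (\<forall>i<n. (\<Sum>j<n. of_int ((\<lambda>i j. A j i) i j) * e' j) = 0)"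
    unfolding e'_def
    by (rule null_root_props[OF offT indT uT nulT _ lnulT n]) (use d0 in simp)
  have e'nul: "\<forall>i<n. (\<Sum>j<n. of_int ((\<lambda>i j. A j i) i j) * e' j) = 0" using e'props by auto
  have deT: "\<forall>i<n. d i * e i > 0" using dpos epos by simp
  have denulT: "\<forall>i<n. (\<Sum>j<n. of_int ((\<lambda>i j. A j i) i j) * (d j * e j)) = 0" using Tnul[OF enul] by simp
  obtain t where t: "\<forall>i<n. e' i = t * (d i * e i)"
    using kernel_one[OF offT indT deT denulT n e'nul] by blast
  have dv: "\<forall>i<n. delta_vee n A d i = t * e i"
    unfolding delta_vee_def e'_def[symmetric] using t dne by simp
  have ex1: "\<exists>!g. (\<forall>j. (n \<le> j \<or> j = aff) \<longrightarrow> g j = 0) \<and> cox n A d g = (\<lambda>j. g j + e j)"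
    by (rule gamma_exists[OF dpos diag sym off ind u nul epos enul esup aff])
  have gprop: "(\<forall>j. (n \<le> j \<or> j = aff) \<longrightarrow> gamma_c n A d aff j = 0) \<and> cox n A d (gamma_c n A d aff) = (\<lambda>j. gamma_c n A d aff j + e j)"
    unfolding gamma_c_def e_def[symmetric] by (rule theI'[OF ex1])
  have grows: "\<forall>i<n. (\<Sum>j<n. of_int (A i j) * gamma_c n A d aff j) = (\<Sum>j<n. Ec A i j * e j)"
    by (rule G_rows[OF dne diag enul]) (use gprop in simp)
  have KG: "\<And>v. Kform n A d (gamma_c n A d aff) v = Ecform n A d v e"
    by (rule Kform_gamma[OF sym grows])
  have Kb: "Kform n A d (gamma_c n A d aff) \<beta> = 0" using assms(5) unfolding U_c_def by simp
  have Ebe: "Ecform n A d \<beta> e = 0" using KG Kb by simp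
  have "Ecform n A d \<beta> e + Ecform n A d e \<beta> = Kform n A d \<beta> e" by (rule Ecform_sym[OF sym diag])
  also have "\<dots> = 0" by (rule Kform_null[OF enul])
  finally have Eeb: "Ecform n A d e \<beta> = 0" using Ebe by simp
  have "Ecform n A d e e + Ecform n A d e e = Kform n A d e e" by (rule Ecform_sym[OF sym diag])
  also have "\<dots> = 0" by (rule Kform_null[OF enul])
  finally have Eee: "Ecform n A d e e = 0" by simp
  have part1: "Ecform n A d (coroot n A d \<beta>) e = 0"
  proof (cases "\<beta> \<in> real_roots n A d")
    case True
    have "\<forall>i<n. coroot n A d \<beta> i = (2 / Kform n A d \<beta> \<beta>) * \<beta> i"
      unfolding coroot_def using True by simp
    hence "Ecform n A d (coroot n A d \<beta>) e = (2 / Kform n A d \<beta> \<beta>) * Ecform n A d \<beta> e"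
      by (rule Ecform_scale)
    thus ?thesis using Ebe by simp
  next
    case False
    define k where "k = (THE k. \<forall>j. \<beta> j = k * delta n A j)"
    have "\<forall>i<n. coroot n A d \<beta> i = (k * t) * e i"
      unfolding coroot_def k_def using False dv by simp
    hence "Ecform n A d (coroot n A d \<beta>) e = (k * t) * Ecform n A d e e"
      by (rule Ecform_scale)
    thus ?thesis using Eee by simp
  qed
  have part2: "Ecform n A d (delta_vee n A d) \<beta> = 0"
  proof -
    have "Ecform n A d (delta_vee n A d) \<beta> = t * Ecform n A d e \<beta>"
      by (rule Ecform_scale) (use dv in simp)
    thus ?thesis using Eeb by simp
  qed
  show ?thesis using part1 part2 unfolding e_def by simp
qed

end
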